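(* Let $\gamma=(a,b,c,d,e,f)$ be a coloring of the tetrahedron, and let $E(u)=u\prod_{i=1}^3(S_i-u)+\prod_{j=1}^4(u-T_j)$. Then $E(u)=Au^2+Bu+C'$ is a polynomial of degree at most $2$ in $u$, with $A=\frac12(ad+bc+ef)$ and $B=-\frac14\big(bc(b+c)+ad(a+d)+ef(e+f)+abc+abd+acd+bcd+abe+bce+ade+cde+acf+bcf+adf+bdf+aef+bef+cef+def\big)$, and its discriminant $D=B^2-4AC'$ satisfies $$D=-\tfrac14\det(C).$$ Consequently the number field generated by the roots of $E$ is $\mathbb Q(\sqrt{-\det C})$.
   Context: $S_1=\frac12(a+b+c+d)$, $S_2=\frac12(a+d+e+f)$, $S_3=\frac12(b+c+e+f)$, $T_1=\frac12(a+b+e)$, $T_2=\frac12(a+c+f)$, $T_3=\frac12(c+d+e)$, $T_4=\frac12(b+d+f)$. The (modified) Cayley–Menger matrix $C=(C_{ij})_{0\le i,j\le4}$ has $C_{00}=0$, $C_{0j}=-1$, $C_{j0}=1$ for $j\ge1$, and $C_{ij}=1-d_{ij}^2/2$ for $i,j\ge1$, where $d_{ii}=0$, $d_{ij}=d_{ji}$ and $d_{12}=a,\ d_{23}=b,\ d_{14}=c,\ d_{34}=d,\ d_{13}=e,\ d_{24}=f$. *)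

theory Defs
  imports "HOL-Analysis.Analysis"
begin

text \<open>Admissible colorings of the tetrahedron: colours are non-negative integers
  and each of the four faces (a,b,e), (a,c,f), (c,d,e), (b,d,f) -- the triples
  appearing in T1..T4 -- satisfies the triangle inequalities and has even sum.\<close>

definition admissible_triple :: "nat \<Rightarrow> nat \<Rightarrow> nat \<Rightarrow> bool" where
  "admissible_triple x y z \<longleftrightarrow> x \<le> y + z \<and> y \<le> x + z \<and> z \<le> x + y \<and> even (x + y + z)"

definition tet_coloring :: "nat \<Rightarrow> nat \<Rightarrow> nat \<Rightarrow> nat \<Rightarrow> nat \<Rightarrow> nat \<Rightarrow> bool" where
  "tet_coloring a b c d e f \<longleftrightarrow>
     admissible_triple a b e \<and> admissible_triple a c f \<and>
     admissible_triple c d e \<and> admissible_triple b d f"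

definition S1 :: "real \<Rightarrow> real \<Rightarrow> real \<Rightarrow> real \<Rightarrow> real \<Rightarrow> real \<Rightarrow> real" where
  "S1 a b c d e f = (a + b + c + d) / 2"
definition S2 :: "real \<Rightarrow> real \<Rightarrow> real \<Rightarrow> real \<Rightarrow> real \<Rightarrow> real \<Rightarrow> real" where
  "S2 a b c d e f = (a + d + e + f) / 2"
definition S3 :: "real \<Rightarrow> real \<Rightarrow> real \<Rightarrow> real \<Rightarrow> real \<Rightarrow> real \<Rightarrow> real" where
  "S3 a b c d e f = (b + c + e + f) / 2"
definition T1 :: "real \<Rightarrow> real \<Rightarrow> real \<Rightarrow> real \<Rightarrow> real \<Rightarrow> real \<Rightarrow> real" where
  "T1 a b c d e f = (a + b + e) / 2"
definition T2 :: "real \<Rightarrow> real \<Rightarrow> real \<Rightarrow> real \<Rightarrow> real \<Rightarrow> real \<Rightarrow> real" where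
  "T2 a b c d e f = (a + c + f) / 2"
definition T3 :: "real \<Rightarrow> real \<Rightarrow> real \<Rightarrow> real \<Rightarrow> real \<Rightarrow> real \<Rightarrow> real" where
  "T3 a b c d e f = (c + d + e) / 2"
definition T4 :: "real \<Rightarrow> real \<Rightarrow> real \<Rightarrow> real \<Rightarrow> real \<Rightarrow> real \<Rightarrow> real" where
  "T4 a b c d e f = (b + d + f) / 2"

definition Efun :: "real \<Rightarrow> real \<Rightarrow> real \<Rightarrow> real \<Rightarrow> real \<Rightarrow> real \<Rightarrow> complex \<Rightarrow> complex" where
  "Efun a b c d e f u =
     u * (of_real (S1 a b c d e f) - u) * (of_real (S2 a b c d e f) - u) * (of_real (S3 a b c d e f) - u)
     + (u - of_real (T1 a b c d e f)) * (u - of_real (T2 a b c d e f))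
       * (u - of_real (T3 a b c d e f)) * (u - of_real (T4 a b c d e f))"

definition dist_tet :: "real \<Rightarrow> real \<Rightarrow> real \<Rightarrow> real \<Rightarrow> real \<Rightarrow> real \<Rightarrow> nat \<Rightarrow> nat \<Rightarrow> real" where
  "dist_tet a b c d e f i j =
     (if {i, j} = {1, 2} then a
      else if {i, j} = {2, 3} then b
      else if {i, j} = {1, 4} then c
      else if {i, j} = {3, 4} then d
      else if {i, j} = {1, 3} then e
      else if {i, j} = {2, 4} then f
      else 0)"

definition CM :: "real \<Rightarrow> real \<Rightarrow> real \<Rightarrow> real \<Rightarrow> real \<Rightarrow> real \<Rightarrow> nat \<Rightarrow> nat \<Rightarrow> real" where
  "CM a b c d e f i j =
     (if i = 0 \<and> j = 0 then 0
      else if i = 0 then -1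
      else if j = 0 then 1
      else 1 - (dist_tet a b c d e f i j)\<^sup>2 / 2)"

definition det5 :: "(nat \<Rightarrow> nat \<Rightarrow> real) \<Rightarrow> real" where
  "det5 M = (\<Sum>p | p permutes {..<5}. of_int (sign p) * (\<Prod>i<5. M i (p i)))"

definition is_subfield_C :: "complex set \<Rightarrow> bool" where
  "is_subfield_C K \<longleftrightarrow> 0 \<in> K \<and> 1 \<in> K \<and> (\<forall>x\<in>K. \<forall>y\<in>K. x + y \<in> K \<and> x * y \<in> K) \<and>
     (\<forall>x\<in>K. - x \<in> K) \<and> (\<forall>x\<in>K. x \<noteq> 0 \<longrightarrow> inverse x \<in> K)"

definition gen_field :: "complex set \<Rightarrow> complex set" where
  "gen_field S = \<Inter> {K. is_subfield_C K \<and> S \<subseteq> K}"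

end

theory Submission
  imports Defs
begin

lemma det5_expand: "det5 M = M 0 0 * M 1 1 * M 2 2 * M 3 3 * M 4 4 - M 0 0 * M 1 1 * M 2 2 * M 3 4 * M 4 3 - M 0 0 * M 1 1 * M 2 3 * M 3 2 * M 4 4 + M 0 0 * M 1 1 * M 2 3 * M 3 4 * M 4 2 + M 0 0 * M 1 1 * M 2 4 * M 3 2 * M 4 3 - M 0 0 * M 1 1 * M 2 4 * M 3 3 * M 4 2 - M 0 0 * M 1 2 * M 2 1 * M 3 3 * M 4 4 + M 0 0 * M 1 2 * M 2 1 * M 3 4 * M 4 3 + M 0 0 * M 1 2 * M 2 3 * M 3 1 * M 4 4 - M 0 0 * M 1 2 * M 2 3 * M 3 4 * M 4 1 - M 0 0 * M 1 2 * M 2 4 * M 3 1 * M 4 3 + M 0 0 * M 1 2 * M 2 4 * M 3 3 * M 4 1 + M 0 0 * M 1 3 * M 2 1 * M 3 2 * M 4 4 - M 0 0 * M 1 3 * M 2 1 * M 3 4 * M 4 2 - M 0 0 * M 1 3 * M 2 2 * M 3 1 * M 4 4 + M 0 0 * M 1 3 * M 2 2 * M 3 4 * M 4 1 + M 0 0 * M 1 3 * M 2 4 * M 3 1 * M 4 2 - M 0 0 * M 1 3 * M 2 4 * M 3 2 * M 4 1 - M 0 0 * M 1 4 * M 2 1 * M 3 2 * M 4 3 + M 0 0 * M 1 4 * M 2 1 * M 3 3 * M 4 2 + M 0 0 * M 1 4 * M 2 2 * M 3 1 * M 4 3 - M 0 0 * M 1 4 * M 2 2 * M 3 3 * M 4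 1 - M 0 0 * M 1 4 * M 2 3 * M 3 1 * M 4 2 + M 0 0 * M 1 4 * M 2 3 * M 3 2 * M 4 1 - M 0 1 * M 1 0 * M 2 2 * M 3 3 * M 4 4 + M 0 1 * M 1 0 * M 2 2 * M 3 4 * M 4 3 + M 0 1 * M 1 0 * M 2 3 * M 3 2 * M 4 4 - M 0 1 * M 1 0 * M 2 3 * M 3 4 * M 4 2 - M 0 1 * M 1 0 * M 2 4 * M 3 2 * M 4 3 + M 0 1 * M 1 0 * M 2 4 * M 3 3 * M 4 2 + M 0 1 * M 1 2 * M 2 0 * M 3 3 * M 4 4 - M 0 1 * M 1 2 * M 2 0 * M 3 4 * M 4 3 - M 0 1 * M 1 2 * M 2 3 * M 3 0 * M 4 4 + M 0 1 * M 1 2 * M 2 3 * M 3 4 * M 4 0 + M 0 1 * M 1 2 * M 2 4 * M 3 0 * M 4 3 - M 0 1 * M 1 2 * M 2 4 * M 3 3 * M 4 0 - M 0 1 * M 1 3 * M 2 0 * M 3 2 * M 4 4 + M 0 1 * M 1 3 * M 2 0 * M 3 4 * M 4 2 + M 0 1 * M 1 3 * M 2 2 * M 3 0 * M 4 4 - M 0 1 * M 1 3 * M 2 2 * M 3 4 * M 4 0 - M 0 1 * M 1 3 * M 2 4 * M 3 0 * M 4 2 + M 0 1 * M 1 3 * M 2 4 * M 3 2 * M 4 0 + M 0 1 * M 1 4 * M 2 0 * M 3 2 * M 4 3 - M 0 1 * M 1 4 * M 2 0 * M 3 3 * M 4 2 - M 0 1 * M 1 4 * M 2 2 * M 3 0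 * M 4 3 + M 0 1 * M 1 4 * M 2 2 * M 3 3 * M 4 0 + M 0 1 * M 1 4 * M 2 3 * M 3 0 * M 4 2 - M 0 1 * M 1 4 * M 2 3 * M 3 2 * M 4 0 + M 0 2 * M 1 0 * M 2 1 * M 3 3 * M 4 4 - M 0 2 * M 1 0 * M 2 1 * M 3 4 * M 4 3 - M 0 2 * M 1 0 * M 2 3 * M 3 1 * M 4 4 + M 0 2 * M 1 0 * M 2 3 * M 3 4 * M 4 1 + M 0 2 * M 1 0 * M 2 4 * M 3 1 * M 4 3 - M 0 2 * M 1 0 * M 2 4 * M 3 3 * M 4 1 - M 0 2 * M 1 1 * M 2 0 * M 3 3 * M 4 4 + M 0 2 * M 1 1 * M 2 0 * M 3 4 * M 4 3 + M 0 2 * M 1 1 * M 2 3 * M 3 0 * M 4 4 - M 0 2 * M 1 1 * M 2 3 * M 3 4 * M 4 0 - M 0 2 * M 1 1 * M 2 4 * M 3 0 * M 4 3 + M 0 2 * M 1 1 * M 2 4 * M 3 3 * M 4 0 + M 0 2 * M 1 3 * M 2 0 * M 3 1 * M 4 4 - M 0 2 * M 1 3 * M 2 0 * M 3 4 * M 4 1 - M 0 2 * M 1 3 * M 2 1 * M 3 0 * M 4 4 + M 0 2 * M 1 3 * M 2 1 * M 3 4 * M 4 0 + M 0 2 * M 1 3 * M 2 4 * M 3 0 * M 4 1 - M 0 2 * M 1 3 * M 2 4 * M 3 1 * M 4 0 - M 0 2 * M 1 4 * M 2 0 * M 3 1 * M 4 3 + M 0 2 * M 1 4 * M 2 0 *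 M 3 3 * M 4 1 + M 0 2 * M 1 4 * M 2 1 * M 3 0 * M 4 3 - M 0 2 * M 1 4 * M 2 1 * M 3 3 * M 4 0 - M 0 2 * M 1 4 * M 2 3 * M 3 0 * M 4 1 + M 0 2 * M 1 4 * M 2 3 * M 3 1 * M 4 0 - M 0 3 * M 1 0 * M 2 1 * M 3 2 * M 4 4 + M 0 3 * M 1 0 * M 2 1 * M 3 4 * M 4 2 + M 0 3 * M 1 0 * M 2 2 * M 3 1 * M 4 4 - M 0 3 * M 1 0 * M 2 2 * M 3 4 * M 4 1 - M 0 3 * M 1 0 * M 2 4 * M 3 1 * M 4 2 + M 0 3 * M 1 0 * M 2 4 * M 3 2 * M 4 1 + M 0 3 * M 1 1 * M 2 0 * M 3 2 * M 4 4 - M 0 3 * M 1 1 * M 2 0 * M 3 4 * M 4 2 - M 0 3 * M 1 1 * M 2 2 * M 3 0 * M 4 4 + M 0 3 * M 1 1 * M 2 2 * M 3 4 * M 4 0 + M 0 3 * M 1 1 * M 2 4 * M 3 0 * M 4 2 - M 0 3 * M 1 1 * M 2 4 * M 3 2 * M 4 0 - M 0 3 * M 1 2 * M 2 0 * M 3 1 * M 4 4 + M 0 3 * M 1 2 * M 2 0 * M 3 4 * M 4 1 + M 0 3 * M 1 2 * M 2 1 * M 3 0 * M 4 4 - M 0 3 * M 1 2 * M 2 1 * M 3 4 * M 4 0 - M 0 3 * M 1 2 * M 2 4 * M 3 0 * M 4 1 + M 0 3 * M 1 2 * M 2 4 * M 3 1 * M 4 0 + M 0 3 * M 1 4 * M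 2 0 * M 3 1 * M 4 2 - M 0 3 * M 1 4 * M 2 0 * M 3 2 * M 4 1 - M 0 3 * M 1 4 * M 2 1 * M 3 0 * M 4 2 + M 0 3 * M 1 4 * M 2 1 * M 3 2 * M 4 0 + M 0 3 * M 1 4 * M 2 2 * M 3 0 * M 4 1 - M 0 3 * M 1 4 * M 2 2 * M 3 1 * M 4 0 + M 0 4 * M 1 0 * M 2 1 * M 3 2 * M 4 3 - M 0 4 * M 1 0 * M 2 1 * M 3 3 * M 4 2 - M 0 4 * M 1 0 * M 2 2 * M 3 1 * M 4 3 + M 0 4 * M 1 0 * M 2 2 * M 3 3 * M 4 1 + M 0 4 * M 1 0 * M 2 3 * M 3 1 * M 4 2 - M 0 4 * M 1 0 * M 2 3 * M 3 2 * M 4 1 - M 0 4 * M 1 1 * M 2 0 * M 3 2 * M 4 3 + M 0 4 * M 1 1 * M 2 0 * M 3 3 * M 4 2 + M 0 4 * M 1 1 * M 2 2 * M 3 0 * M 4 3 - M 0 4 * M 1 1 * M 2 2 * M 3 3 * M 4 0 - M 0 4 * M 1 1 * M 2 3 * M 3 0 * M 4 2 + M 0 4 * M 1 1 * M 2 3 * M 3 2 * M 4 0 + M 0 4 * M 1 2 * M 2 0 * M 3 1 * M 4 3 - M 0 4 * M 1 2 * M 2 0 * M 3 3 * M 4 1 - M 0 4 * M 1 2 * M 2 1 * M 3 0 * M 4 3 + M 0 4 * M 1 2 * M 2 1 * M 3 3 * M 4 0 + M 0 4 * M 1 2 * M 2 3 * M 3 0 * M 4 1 - M 0 4 * M 1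 2 * M 2 3 * M 3 1 * M 4 0 - M 0 4 * M 1 3 * M 2 0 * M 3 1 * M 4 2 + M 0 4 * M 1 3 * M 2 0 * M 3 2 * M 4 1 + M 0 4 * M 1 3 * M 2 1 * M 3 0 * M 4 2 - M 0 4 * M 1 3 * M 2 1 * M 3 2 * M 4 0 - M 0 4 * M 1 3 * M 2 2 * M 3 0 * M 4 1 + M 0 4 * M 1 3 * M 2 2 * M 3 1 * M 4 0"
proof -
  have U: "{..<5::nat} = insert 0 (insert 1 (insert 2 (insert 3 {4})))" by auto
  have f1: "finite (insert 1 (insert 2 (insert 3 {4::nat})))" "0 \<notin> (insert 1 (insert 2 (insert 3 {4::nat})))" by auto
  have f2: "finite (insert 2 (insert 3 {4::nat}))" "1 \<notin> (insert 2 (insert 3 {4::nat}))" by auto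
  have f3: "finite (insert 3 {4::nat})" "2 \<notin> (insert 3 {4::nat})" by auto
  have f4: "finite {4::nat}" "3 \<notin> {4::nat}" by auto
  show ?thesis
    unfolding det5_def U
    unfolding sum_over_permutations_insert[OF f1] sum_over_permutations_insert[OF f2]
      sum_over_permutations_insert[OF f3] sum_over_permutations_insert[OF f4] permutes_sing
    apply (simp add: sign_swap_id permutation_swap_id sign_compose permutation_compose transpose_def)
    done
qed

lemma Efun_quad:
  fixes a b c d e f :: real
  shows "Efun a b c d e f u = of_real ((a * d + b * c + e * f) / 2) * u\<^sup>2
     + of_real (- (b * c * (b + c) + a * d * (a + d) + e * f * (e + f)
               + a * b * c + a * b * d + a * c * d + b * c * d + a * b * e + b * c * e
               + a * d * e + c * d * e + a * c * f + b * c * f + a * d * f + b * d * f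
               + a * e * f + b * e * f + c * e * f + d * e * f) / 4) * u
     + of_real (T1 a b c d e f * T2 a b c d e f * T3 a b c d e f * T4 a b c d e f)"
  unfolding Efun_def S1_def S2_def S3_def T1_def T2_def T3_def T4_def
  by (simp add: field_simps power2_eq_square)

lemma disc:
  fixes a b c d e f :: real
  shows "(- (b * c * (b + c) + a * d * (a + d) + e * f * (e + f)
               + a * b * c + a * b * d + a * c * d + b * c * d + a * b * e + b * c * e
               + a * d * e + c * d * e + a * c * f + b * c * f + a * d * f + b * d * f
               + a * e * f + b * e * f + c * e * f + d * e * f) / 4)\<^sup>2
    - 4 * ((a * d + b * c + e * f) / 2) * (T1 a b c d e f * T2 a b c d e f * T3 a b c d e f * T4 a b c d e f)
    = - det5 (CM a b c d e f) / 4"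
  unfolding det5_expand T1_def T2_def T3_def T4_def
  by (simp add: CM_def dist_tet_def doubleton_eq_iff field_simps power2_eq_square)

lemma gen_field_sub: "is_subfield_C (gen_field S)"
  unfolding gen_field_def is_subfield_C_def by blast

lemma gen_field_incl: "S \<subseteq> gen_field S"
  unfolding gen_field_def by blast

lemma gen_field_min: "is_subfield_C K \<Longrightarrow> S \<subseteq> K \<Longrightarrow> gen_field S \<subseteq> K"
  unfolding gen_field_def by blast

lemma sf_nat: "is_subfield_C K \<Longrightarrow> of_nat n \<in> K"
  by (induction n) (auto simp: is_subfield_C_def)

lemma sf_add: "is_subfield_C K \<Longrightarrow> x \<in> K \<Longrightarrow> y \<in> K \<Longrightarrow> x + y \<in> K"
  by (auto simp: is_subfield_C_def)
lemma sf_mult: "is_subfield_C K \<Longrightarrow> x \<in> K \<Longrightarrow> y \<in> K \<Longrightarrow> x * y \<in> K"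
  by (auto simp: is_subfield_C_def)
lemma sf_minus: "is_subfield_C K \<Longrightarrow> x \<in> K \<Longrightarrow> y \<in> K \<Longrightarrow> x - y \<in> K"
proof -
  assume K: "is_subfield_C K" "x \<in> K" "y \<in> K"
  hence "- y \<in> K" unfolding is_subfield_C_def by blast
  hence "x + - y \<in> K" using K unfolding is_subfield_C_def by blast
  thus "x - y \<in> K" by simp
qed
lemma sf_uminus: "is_subfield_C K \<Longrightarrow> x \<in> K \<Longrightarrow> - x \<in> K"
  by (auto simp: is_subfield_C_def)
lemma sf_div: "is_subfield_C K \<Longrightarrow> x \<in> K \<Longrightarrow> y \<in> K \<Longrightarrow> x / y \<in> K"
  unfolding divide_inverse
  by (cases "y = 0") (auto simp: is_subfield_C_def)

lemma csqrt_4: "csqrt (of_real (4 * x)) = 2 * csqrt (of_real x)"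
proof -
  have "sqrt (- (4 * x)) = 2 * sqrt (- x)"
    using real_sqrt_mult[of 4 "- x"] by simp
  thus ?thesis by (simp add: csqrt_of_real' real_sqrt_mult abs_mult)
qed
lemma quad_roots:
  fixes A B C s u :: complex
  assumes "A \<noteq> 0" "s\<^sup>2 = B\<^sup>2 - 4 * A * C"
  shows "A * u\<^sup>2 + B * u + C = 0 \<longleftrightarrow> u = (- B + s) / (2 * A) \<or> u = (- B - s) / (2 * A)"
proof -
  have "4 * A * (A * u\<^sup>2 + B * u + C) = (2 * A * u + B - s) * (2 * A * u + B + s)"
    using assms(2) by (simp add: algebra_simps power2_eq_square)
  hence "A * u\<^sup>2 + B * u + C = 0 \<longleftrightarrow> 2 * A * u + B - s = 0 \<or> 2 * A * u + B + s = 0"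
    using assms(1) by (metis mult_eq_0_iff zero_neq_numeral)
  moreover have "2 * A * u + B - s = 0 \<longleftrightarrow> u = (- B + s) / (2 * A)"
    using assms(1) by (simp add: eq_divide_eq algebra_simps)
  moreover have "2 * A * u + B + s = 0 \<longleftrightarrow> u = (- B - s) / (2 * A)"
    using assms(1) by (simp add: eq_divide_eq algebra_simps) (metis add.commute add_eq_0_iff2 eq_diff_eq)
  ultimately show ?thesis by blast
qed

theorem lemma9p3:
  fixes a b c d e f :: nat
  assumes "tet_coloring a b c d e f"
  defines "A \<equiv> (real a * real d + real b * real c + real e * real f) / 2"
      and "B \<equiv> - (real b * real c * (real b + real c) + real a * real d * (real a + real d)
               + real e * real f * (real e + real f)
               + real a * real b * real c + real a * real b * real d + real a * real c * real d
               + real b * real c * real d + real a * real b * real e + real b * real c * real e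
               + real a * real d * real e + real c * real d * real e + real a * real c * real f
               + real b * real c * real f + real a * real d * real f + real b * real d * real f
               + real a * real e * real f + real b * real e * real f + real c * real e * real f
               + real d * real e * real f) / 4"
      and "detC \<equiv> det5 (CM (real a) (real b) (real c) (real d) (real e) (real f))"
  shows "\<exists>C'::real.
           (\<forall>u::complex. Efun (real a) (real b) (real c) (real d) (real e) (real f) u
                 = of_real A * u\<^sup>2 + of_real B * u + of_real C')
         \<and> B\<^sup>2 - 4 * A * C' = - detC / 4
         \<and> (A \<noteq> 0 \<longrightarrow>
              gen_field {u. Efun (real a) (real b) (real c) (real d) (real e) (real f) u = 0}
              = gen_field {csqrt (of_real (- detC))})"
proof -
  let ?a = "real a" and ?b = "real b" and ?c = "real c" and ?d = "real d" and ?e = "real e" and ?f = "real f"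
  define C' where "C' = T1 ?a ?b ?c ?d ?e ?f * T2 ?a ?b ?c ?d ?e ?f * T3 ?a ?b ?c ?d ?e ?f * T4 ?a ?b ?c ?d ?e ?f"
  have E: "\<forall>u::complex. Efun ?a ?b ?c ?d ?e ?f u = of_real A * u\<^sup>2 + of_real B * u + of_real C'"
    unfolding A_def B_def C'_def by (intro allI, rule Efun_quad)
  have D: "B\<^sup>2 - 4 * A * C' = - detC / 4"
    unfolding A_def B_def C'_def detC_def by (rule disc)
  have F: "gen_field {u. Efun ?a ?b ?c ?d ?e ?f u = 0} = gen_field {csqrt (of_real (- detC))}"
    if A0: "A \<noteq> 0"
  proof -
    define s where "s = csqrt (of_real (B\<^sup>2 - 4 * A * C'))"
    have s2: "s\<^sup>2 = (of_real B)\<^sup>2 - 4 * of_real A * of_real C'"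
      unfolding s_def by simp
    have cs: "csqrt (of_real (- detC)) = 2 * s"
      unfolding s_def D using csqrt_4[of "- detC / 4"] by simp
    have A0': "(of_real A :: complex) \<noteq> 0" using A0 by simp
    have roots: "\<And>u. Efun ?a ?b ?c ?d ?e ?f u = 0 \<longleftrightarrow>
        u = (- of_real B + s) / (2 * of_real A) \<or> u = (- of_real B - s) / (2 * of_real A)"
      using E quad_roots[OF A0' s2] by simp
    let ?K1 = "gen_field {u. Efun ?a ?b ?c ?d ?e ?f u = 0}"
    let ?K2 = "gen_field {csqrt (of_real (- detC))}"
    have K1: "is_subfield_C ?K1" and K2: "is_subfield_C ?K2" by (rule gen_field_sub)+
    have rat: "of_real A \<in> K \<and> of_real B \<in> K" if "is_subfield_C K" for K
    proof -
      have eA: "A = real (a * d + b * c + e * f) / 2"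
        unfolding A_def by simp
      define NB where "NB = b * c * (b + c) + a * d * (a + d)
               + e * f * (e + f)
               + a * b * c + a * b * d + a * c * d
               + b * c * d + a * b * e + b * c * e
               + a * d * e + c * d * e + a * c * f
               + b * c * f + a * d * f + b * d * f
               + a * e * f + b * e * f + c * e * f
               + d * e * f"
      have eB: "B = - real NB / 4"
        unfolding B_def NB_def by (simp only: of_nat_add of_nat_mult)
      have k1: "complex_of_real (real n / 2) \<in> K" for n
      proof -
        have "complex_of_real (real n / 2) = of_nat n / of_nat 2" by simp
        thus ?thesis using sf_div[OF that sf_nat[OF that, of n] sf_nat[OF that, of 2]] by simp
      qed
      have k2: "complex_of_real (- real n / 4) \<in> K" for n
      proof -
        have "complex_of_real (- real n / 4) = - (of_nat n / of_nat 4)" by simp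
        thus ?thesis using sf_uminus[OF that sf_div[OF that sf_nat[OF that, of n] sf_nat[OF that, of 4]]] by simp
      qed
      have "complex_of_real A \<in> K" unfolding eA by (rule k1)
      moreover have "complex_of_real B \<in> K" unfolding eB by (rule k2)
      ultimately show ?thesis by blast
    qed
    have sK2: "s \<in> ?K2"
    proof -
      have "csqrt (of_real (- detC)) \<in> ?K2" using gen_field_incl by blast
      hence "csqrt (of_real (- detC)) / 2 \<in> ?K2"
        using sf_div[OF K2] sf_nat[OF K2, of 2] by simp
      thus ?thesis using cs by simp
    qed
    have "{u. Efun ?a ?b ?c ?d ?e ?f u = 0} \<subseteq> ?K2"
    proof
      fix u assume "u \<in> {u. Efun ?a ?b ?c ?d ?e ?f u = 0}"
      hence "u = (- of_real B + s) / (2 * of_real A) \<or> u = (- of_real B - s) / (2 * of_real A)"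
        using roots by simp
      moreover have two: "(2::complex) \<in> ?K2" using sf_nat[OF K2, of 2] by simp
      moreover have "(- of_real B + s) / (2 * of_real A) \<in> ?K2"
        using rat[OF K2] sK2 two by (intro sf_div[OF K2] sf_add[OF K2] sf_uminus[OF K2] sf_mult[OF K2]) auto
      moreover have "(- of_real B - s) / (2 * of_real A) \<in> ?K2"
        using rat[OF K2] sK2 two by (intro sf_div[OF K2] sf_minus[OF K2] sf_uminus[OF K2] sf_mult[OF K2]) auto
      ultimately show "u \<in> ?K2" by auto
    qed
    hence sub1: "?K1 \<subseteq> ?K2" by (rule gen_field_min[OF K2])
    define r where "r = (- of_real B + s) / (2 * of_real A)"
    have "r \<in> {u. Efun ?a ?b ?c ?d ?e ?f u = 0}" using roots[of r] unfolding r_def by simp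
    hence "r \<in> ?K1" by (rule subsetD[OF gen_field_incl])
    have eq: "csqrt (of_real (- detC)) = 2 * (2 * of_real A * r + of_real B)"
      unfolding cs r_def using A0' by (simp add: field_simps)
    have two1: "(2::complex) \<in> ?K1" using sf_nat[OF K1, of 2] by simp
    have "2 * (2 * of_real A * r + of_real B) \<in> ?K1"
      using rat[OF K1] \<open>r \<in> ?K1\<close> two1 by (intro sf_add[OF K1] sf_mult[OF K1]) auto
    hence "csqrt (of_real (- detC)) \<in> ?K1" by (simp only: eq)
    hence sub2: "?K2 \<subseteq> ?K1" by (intro gen_field_min[OF K1]) auto
    show ?thesis using sub1 sub2 by blast
  qed
  show ?thesis using E D F by blast
qed

end
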